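(* In the setting below, if a PHB $\mathbf{E}$ is $\Delta^-$-stable but $\Delta^+$-unstable, then it can be expressed uniquely as a nonsplit extension of PHBs $0\to\mathbf{L}^+\to\mathbf{E}\to\mathbf{L}^-\to0$, where $\mathbf{L}^\pm$ are parabolic Higgs line bundles with discrete data $S$ and $S^c$ respectively. Conversely, any such extension is $\Delta^-$-stable but $\Delta^+$-unstable.
   Context: Fix distinct $x_1,\dots,x_n\in\mathbb{C}\mathbb{P}^1$. Weights $\beta=(\beta_1(x_i),\beta_2(x_i))_i$ with $0\le\beta_1(x_i)<\beta_2(x_i)<1$ form the weight space $Q$; $\varepsilon_T(\alpha)=\sum_{i\in T}\alpha_i-\sum_{i\notin T}\alpha_i$ for $\alpha=\beta_2-\beta_1$. Walls: intersections of $Q$ with hyperplanes $\varepsilon_T(\beta_2-\beta_1)=0$; chambers: components of the complement. Throughout, PHBs are rank-2 parabolic Higgs bundles $(E,\Phi)$ over $\mathbb{C}\mathbb{P}^1$ which are trivial as holomorphic bundles, with fixed determinant and trace-free Higgs field ($E$ has a line $E_{x_i,2}\subset E_{x_i}$ at each $x_i$ with weights $\beta_1(x_i)<\beta_2(x_i)$; $\Phi$ a meromorphic $\mathrm{End}_0(E)\otimes K_{\mathbb{C}\mathbb{P}^1}$-valued section with at most simple poles at the $x_i$, residues mapping $E_{x_i}$ into $E_{x_i,2}$ and killing $E_{x_i,2}$), and parabolic Higgs line bundles are holomorphically trivial. A parabolic Higgs line bundle has at each $x_i$ weight $\beta_1(x_i)$ or $\beta_2(x_i)$; its discrete data is the set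 of $i$ with weight $\beta_2(x_i)$ (for a subbundle $L\subset E$, $\{i:L_{x_i}=E_{x_i,2}\}$; quotients get complementary weights). $(E,\Phi)$ is $\beta$-stable iff every $\Phi$-invariant line subbundle $L$ with discrete data $S_L$ has $\varepsilon_{S_L}(\beta_2-\beta_1)<0$. Fix a point of $Q$ on exactly one wall $W$, with adjacent chambers $\Delta^\pm$, and let $S$ be the index set of $W$ normalized so that $\varepsilon_S(\beta_2-\beta_1)>0$ on $\Delta^+$; $\Delta^\pm$-stable means stable for weights in $\Delta^\pm$. *)

theory Defs
  imports "HOL-Analysis.Analysis"
begin

text \<open>Model: the underlying bundle E is the trivial bundle with fibre complex^2.
  Marked points x i in CP^1 are encoded as complex option (None = the point at infinity).\<close>

definition cline :: "complex^2 \<Rightarrow> (complex^2) set" where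
  "cline v = {c *s v | c. True}"

definition is_line :: "(complex^2) set \<Rightarrow> bool" where
  "is_line L \<longleftrightarrow> (\<exists>v. v \<noteq> 0 \<and> L = cline v)"

text \<open>A PHB: flags fl i (the lines E_{x_i,2}) and the residues A i of the Higgs field at x_i.
  Residues map the fibre into fl i and kill fl i; holomorphy at infinity of
  Phi = sum over finite x_i of A_i dz/(z - x_i) (with A at the point at infinity, if it is
  a marked point, equal to its residue there) amounts to sum A_i = 0.\<close>

definition is_PHB :: "('n::finite \<Rightarrow> (complex^2) set) \<Rightarrow> ('n \<Rightarrow> complex^2^2) \<Rightarrow> bool" where
  "is_PHB fl A \<longleftrightarrow> (\<forall>i. is_line (fl i)) \<and> (\<forall>i w. A i *v w \<in> fl i)
     \<and> (\<forall>i. \<forall>w\<in>fl i. A i *v w = 0) \<and> (\<Sum>i\<in>UNIV. A i) = 0"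

text \<open>The Higgs field in the affine coordinate z (coefficient of dz), applied to a vector.\<close>
definition higgs_apply :: "('n::finite \<Rightarrow> complex option) \<Rightarrow> ('n \<Rightarrow> complex^2^2) \<Rightarrow> complex \<Rightarrow> complex^2 \<Rightarrow> complex^2" where
  "higgs_apply x A z w = (\<Sum>i\<in>{i. x i \<noteq> None}. (1 / (z - the (x i))) *s (A i *v w))"

definition poles :: "('n::finite \<Rightarrow> complex option) \<Rightarrow> complex set" where
  "poles x = {the (x i) | i. x i \<noteq> None}"

text \<open>A trivial line subbundle (constant line L) is Phi-invariant.\<close>
definition higgs_invariant :: "('n::finite \<Rightarrow> complex option) \<Rightarrow> ('n \<Rightarrow> complex^2^2) \<Rightarrow> (complex^2) set \<Rightarrow> bool" where
  "higgs_invariant x A L \<longleftrightarrow> (\<forall>z. z \<notin> poles x \<longrightarrow> (\<forall>w\<in>L. higgs_apply x A z w \<in> L))"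

definition disc_data :: "('n \<Rightarrow> (complex^2) set) \<Rightarrow> (complex^2) set \<Rightarrow> 'n set" where
  "disc_data fl L = {i. L = fl i}"

definition quot_disc_data :: "('n \<Rightarrow> (complex^2) set) \<Rightarrow> (complex^2) set \<Rightarrow> 'n set" where
  "quot_disc_data fl L = {i. fl i \<noteq> L}"

definition eps :: "'n::finite set \<Rightarrow> real^'n \<Rightarrow> real" where
  "eps T a = (\<Sum>i\<in>T. a$i) - (\<Sum>i\<in>-T. a$i)"

definition weight_space :: "((real^'n::finite) \<times> (real^'n)) set" where
  "weight_space = {(b1, b2). \<forall>i. 0 \<le> b1$i \<and> b1$i < b2$i \<and> b2$i < 1}"

definition alpha :: "(real^'n::finite) \<times> (real^'n) \<Rightarrow> real^'n" where
  "alpha b = snd b - fst b"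

definition wall :: "'n::finite set \<Rightarrow> ((real^'n) \<times> (real^'n)) set" where
  "wall T = {b \<in> weight_space. eps T (alpha b) = 0}"

definition chambers :: "((real^'n::finite) \<times> (real^'n)) set set" where
  "chambers = components (weight_space - (\<Union>T. wall T))"

definition stable :: "('n::finite \<Rightarrow> complex option) \<Rightarrow> ('n \<Rightarrow> (complex^2) set) \<Rightarrow> ('n \<Rightarrow> complex^2^2)
    \<Rightarrow> (real^'n) \<times> (real^'n) \<Rightarrow> bool" where
  "stable x fl A b \<longleftrightarrow>
     (\<forall>L. is_line L \<and> higgs_invariant x A L \<longrightarrow> eps (disc_data fl L) (alpha b) < 0)"

definition chamber_stable where
  "chamber_stable x fl A D \<longleftrightarrow> (\<forall>b\<in>D. stable x fl A b)"

definition chamber_unstable where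
  "chamber_unstable x fl A D \<longleftrightarrow> (\<forall>b\<in>D. \<not> stable x fl A b)"

text \<open>The extension 0 -> L -> E -> E/L -> 0 splits as PHBs: there is a complementary
  Phi-invariant trivial line subbundle L' with E = L (+) L' compatibly with the flags.\<close>
definition PHB_splits where
  "PHB_splits x fl A L \<longleftrightarrow>
     (\<exists>L'. is_line L' \<and> L' \<noteq> L \<and> higgs_invariant x A L' \<and> (\<forall>i. fl i = L \<or> fl i = L'))"

definition nonsplit_ext where
  "nonsplit_ext x fl A S L \<longleftrightarrow> is_line L \<and> higgs_invariant x A L \<and> disc_data fl L = S
     \<and> quot_disc_data fl L = - S \<and> \<not> PHB_splits x fl A L"

end

theory Submission
  imports Defs
begin

lemma eps_alt: "eps T (a::real^'n::finite) = 2 * (\<Sum>i\<in>T. a$i) - (\<Sum>i\<in>UNIV. a$i)"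
proof -
  have "(\<Sum>i\<in>UNIV. a$i) = (\<Sum>i\<in>T. a$i) + (\<Sum>i\<in>-T. a$i)"
    by (subst sum.union_disjoint[symmetric]) auto
  thus ?thesis unfolding eps_def by simp
qed

lemma eps_neg: "eps (-T) (a::real^'n::finite) = - eps T a"
  unfolding eps_def by simp

lemma alpha_pos: "b \<in> weight_space \<Longrightarrow> (alpha b)$i > 0"
  unfolding weight_space_def alpha_def by (cases b) auto

lemma cont_g: "continuous_on UNIV (\<lambda>b::(real^'n::finite)\<times>(real^'n). eps T (alpha b))"
  unfolding eps_def alpha_def by (intro continuous_intros)

lemma closure_lt:
  fixes b0 :: "(real^'n::finite)\<times>(real^'n)"
  assumes "b0 \<in> closure D" "eps T (alpha b0) < 0"
  shows "\<exists>b\<in>D. eps T (alpha b) < 0"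
proof -
  let ?U = "{b::(real^'n)\<times>(real^'n). eps T (alpha b) < 0}"
  have "open ?U" using cont_g[of T]
    by (intro open_Collect_less) (auto intro: continuous_on_const)
  moreover have "b0 \<in> ?U" using assms by simp
  ultimately have "?U \<inter> D \<noteq> {}" using assms(1) open_Int_closure_eq_empty by blast
  thus ?thesis by blast
qed

lemma closure_gt:
  fixes b0 :: "(real^'n::finite)\<times>(real^'n)"
  assumes "b0 \<in> closure D" "eps T (alpha b0) > 0"
  shows "\<exists>b\<in>D. eps T (alpha b) > 0"
proof -
  have "eps (-T) (alpha b0) < 0" using assms eps_neg[of T "alpha b0"] by simp
  then obtain b where "b\<in>D" "eps (-T) (alpha b) < 0" using closure_lt assms(1) by blast
  thus ?thesis using eps_neg[of T "alpha b"] by (metis neg_less_0_iff_less)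
qed

lemma chamber_nz:
  assumes "D \<in> chambers" "b \<in> D"
  shows "eps T (alpha b) \<noteq> 0"
proof -
  have "D \<subseteq> weight_space - (\<Union>T. wall T)"
    using assms(1) in_components_subset unfolding chambers_def by blast
  thus ?thesis using assms(2) unfolding wall_def by blast
qed

lemma chamber_sign:
  assumes "D \<in> chambers" "b \<in> D" "b' \<in> D" "eps T (alpha b) > 0"
  shows "eps T (alpha b') > 0"
proof (rule ccontr)
  assume "\<not> ?thesis"
  hence neg: "eps T (alpha b') < 0" using chamber_nz[OF assms(1,3), of T] by linarith
  have "connected D" using assms(1) in_components_connected unfolding chambers_def by blast
  hence "connected ((\<lambda>b. eps T (alpha b)) ` D)"
    using connected_continuous_image continuous_on_subset[OF cont_g] by blast
  hence "0 \<in> (\<lambda>b. eps T (alpha b)) ` D"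
    using connectedD_interval[of _ "eps T (alpha b')" "eps T (alpha b)" 0] neg assms
    by (meson image_eqI less_imp_le)
  then obtain c where "c \<in> D" "eps T (alpha c) = 0" by auto
  thus False using chamber_nz[OF assms(1), of c T] by blast
qed

lemma chambers_ne: "D \<in> chambers \<Longrightarrow> \<exists>b. b \<in> D"
  unfolding chambers_def using in_components_nonempty by blast

theorem mainTheorem8:
  fixes x :: "'n::finite \<Rightarrow> complex option"
    and fl :: "'n \<Rightarrow> (complex^2) set" and A :: "'n \<Rightarrow> complex^2^2"
    and b0 :: "(real^'n) \<times> (real^'n)" and S :: "'n set"
    and Dp Dm :: "((real^'n) \<times> (real^'n)) set"
  assumes "inj x"
    and "b0 \<in> weight_space"
    and "\<forall>T. b0 \<in> wall T \<longleftrightarrow> (T = S \<or> T = - S)"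
    and "Dp \<in> chambers" and "Dm \<in> chambers"
    and "b0 \<in> closure Dp" and "b0 \<in> closure Dm"
    and "\<forall>b\<in>Dp. eps S (alpha b) > 0"
    and "\<forall>b\<in>Dm. eps S (alpha b) < 0"
    and "is_PHB fl A"
  shows "(chamber_stable x fl A Dm \<and> chamber_unstable x fl A Dp
            \<longrightarrow> (\<exists>!L. nonsplit_ext x fl A S L))
       \<and> ((\<exists>L. nonsplit_ext x fl A S L)
            \<longrightarrow> chamber_stable x fl A Dm \<and> chamber_unstable x fl A Dp)"
proof -
  obtain bp where bp: "bp \<in> Dp" using chambers_ne assms(4) by blast
  obtain bm where bm: "bm \<in> Dm" using chambers_ne assms(5) by blast
  have w0: "eps S (alpha b0) = 0" using assms(2,3) unfolding wall_def by blast
  have apos: "\<And>i. (alpha b0)$i > 0" using alpha_pos assms(2) by blast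
  have tot: "(\<Sum>i\<in>UNIV. (alpha b0)$i) > 0" using apos by (simp add: sum_pos)
  have Sne: "S \<noteq> {}"
  proof
    assume "S = {}" thus False using w0 tot eps_alt[of S "alpha b0"] by simp
  qed
  have strict: "eps T (alpha b0) < 0" if "T \<subset> -S" for T
  proof -
    have "(\<Sum>i\<in>-S. (alpha b0)$i) = (\<Sum>i\<in>-S - T. (alpha b0)$i) + (\<Sum>i\<in>T. (alpha b0)$i)"
      using that by (intro sum.subset_diff) auto
    moreover have "(\<Sum>i\<in>-S - T. (alpha b0)$i) > 0"
      using that apos by (intro sum_pos) auto
    moreover have "eps (-S) (alpha b0) = 0" using w0 eps_neg[of S "alpha b0"] by simp
    ultimately show ?thesis using eps_alt[of T "alpha b0"] eps_alt[of "-S" "alpha b0"] by linarith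
  qed
  have uniq: "L1 = L2" if "nonsplit_ext x fl A S L1" "nonsplit_ext x fl A S L2" for L1 L2
  proof -
    obtain i where "i \<in> S" using Sne by blast
    thus ?thesis using that unfolding nonsplit_ext_def disc_data_def by blast
  qed
  have D1: "\<exists>!L. nonsplit_ext x fl A S L"
    if st: "chamber_stable x fl A Dm" and un: "chamber_unstable x fl A Dp"
  proof -
    obtain L where L: "is_line L" "higgs_invariant x A L"
      "\<not> eps (disc_data fl L) (alpha bp) < 0"
      using un bp unfolding chamber_unstable_def stable_def by blast
    define T where "T = disc_data fl L"
    have stm: "\<forall>b\<in>Dm. eps T (alpha b) < 0"
      using st L unfolding chamber_stable_def stable_def T_def by blast
    have "eps T (alpha bp) > 0" using L(3) chamber_nz[OF assms(4) bp, of T] T_def by force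
    hence spp: "\<forall>b\<in>Dp. eps T (alpha b) > 0" using chamber_sign[OF assms(4) bp] by blast
    have "eps T (alpha b0) = 0"
    proof (rule ccontr)
      assume "eps T (alpha b0) \<noteq> 0"
      hence "eps T (alpha b0) < 0 \<or> eps T (alpha b0) > 0" by linarith
      thus False
        using closure_lt[OF assms(6), of T] closure_gt[OF assms(7), of T] stm spp by force
    qed
    hence "b0 \<in> wall T" using assms(2) unfolding wall_def by blast
    hence "T = S \<or> T = -S" using assms(3) by blast
    moreover have "T \<noteq> -S"
    proof
      assume "T = -S"
      thus False using spp bp assms(8) eps_neg[of S "alpha bp"] by force
    qed
    ultimately have TS: "T = S" by blast
    have ns: "\<not> PHB_splits x fl A L"
    proof
      assume "PHB_splits x fl A L"
      then obtain L' where L': "is_line L'" "L' \<noteq> L" "higgs_invariant x A L'"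
        "\<forall>i. fl i = L \<or> fl i = L'" unfolding PHB_splits_def by blast
      have "disc_data fl L' = -S" using L' TS T_def unfolding disc_data_def by auto
      hence "eps (-S) (alpha bm) < 0"
        using st bm L' unfolding chamber_stable_def stable_def by metis
      thus False using assms(9) bm eps_neg[of S "alpha bm"] by force
    qed
    have "nonsplit_ext x fl A S L"
      unfolding nonsplit_ext_def using L TS T_def ns
      by (auto simp: disc_data_def quot_disc_data_def)
    thus ?thesis using uniq by blast
  qed
  have D2: "chamber_stable x fl A Dm \<and> chamber_unstable x fl A Dp"
    if "nonsplit_ext x fl A S L" for L
  proof
    have L: "is_line L" "higgs_invariant x A L" "disc_data fl L = S" "\<not> PHB_splits x fl A L"
      using that unfolding nonsplit_ext_def by auto
    show "chamber_unstable x fl A Dp"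
      unfolding chamber_unstable_def stable_def using L assms(8) by force
    show "chamber_stable x fl A Dm"
      unfolding chamber_stable_def stable_def
    proof (intro ballI allI impI)
      fix b L'' assume b: "b \<in> Dm" and L'': "is_line L'' \<and> higgs_invariant x A L''"
      show "eps (disc_data fl L'') (alpha b) < 0"
      proof (cases "L'' = L")
        case True thus ?thesis using L assms(9) b by simp
      next
        case False
        define T where "T = disc_data fl L''"
        have sub: "T \<subseteq> -S" using False L(3) unfolding T_def disc_data_def by auto
        have "T \<noteq> -S"
        proof
          assume "T = -S"
          hence "\<forall>i. fl i = L \<or> fl i = L''" using L(3) unfolding T_def disc_data_def by blast
          thus False using L(4) L'' False unfolding PHB_splits_def by blast
        qed
        hence "eps T (alpha b0) < 0" using strict sub by blast
        then obtain b' where b': "b' \<in> Dm" "eps T (alpha b') < 0"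
          using closure_lt[OF assms(7)] by blast
        have "\<not> eps T (alpha b) > 0" using chamber_sign[OF assms(5) b b'(1)] b'(2) by force
        thus ?thesis using chamber_nz[OF assms(5) b, of T] T_def by force
      qed
    qed
  qed
  show ?thesis using D1 D2 by blast
qed

end
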